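(* Let $q$ be a prime and $k\geq 2$, and let $f$ be a linear Latin hypercube of order $q$ and dimension $k$. Then there is a unique function $R:\mathbb{F}_q^3\to\mathbb{F}_q$ such that for every rectangle $(a,b,c,d)$ (of any two distinct directions) one has $f(a)=R(f(b),f(c),f(d))$.
   Context: A Latin hypercube of order $q$ and dimension $k$ is a function $f:\mathbb{F}_q^k\to\mathbb{F}_q$ such that fixing any $k-1$ arguments gives a bijection in the remaining argument. It is linear if there are permutations $\alpha_0,\alpha_1,\dots,\alpha_k$ of $\mathbb{F}_q$ with $\alpha_0(f(x_1,\dots,x_k))=\alpha_1(x_1)+\cdots+\alpha_k(x_k)$ for all $x$. For distinct $i,j\in\{1,\dots,k\}$, a rectangle of directions $i$ and $j$ is a quadruple $(a,b,c,d)$ of elements of $\mathbb{F}_q^k$ with $a_i=b_i$, $c_i=d_i$, $b_j=c_j$, $d_j=a_j$, and $a_l=b_l=c_l=d_l$ for all $l\notin\{i,j\}$. *)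

theory Defs
  imports "HOL-Analysis.Analysis" "HOL-Computational_Algebra.Primes"
begin

text \<open>The field F_q (q prime) is modelled by a finite field type 'a of prime
cardinality; the index set {1..k} of coordinates by a finite type 'k with CARD('k) = k.\<close>

definition vupd :: "'a ^ 'k \<Rightarrow> 'k \<Rightarrow> 'a \<Rightarrow> 'a ^ 'k" where
  "vupd x i t = (\<chi> l. if l = i then t else x $ l)"

definition latin_hypercube :: "('a ^ 'k \<Rightarrow> 'a) \<Rightarrow> bool" where
  "latin_hypercube f \<longleftrightarrow> (\<forall>x i. bij (\<lambda>t. f (vupd x i t)))"

definition linear_latin_hypercube :: "('a::comm_monoid_add ^ 'k::finite \<Rightarrow> 'a) \<Rightarrow> bool" where
  "linear_latin_hypercube f \<longleftrightarrow> latin_hypercube f \<and>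
     (\<exists>\<alpha>0 (\<alpha> :: 'k \<Rightarrow> 'a \<Rightarrow> 'a). bij \<alpha>0 \<and> (\<forall>i. bij (\<alpha> i)) \<and>
        (\<forall>x. \<alpha>0 (f x) = (\<Sum>i\<in>UNIV. \<alpha> i (x $ i))))"

definition rectangle :: "'k \<Rightarrow> 'k \<Rightarrow> 'a ^ 'k \<Rightarrow> 'a ^ 'k \<Rightarrow> 'a ^ 'k \<Rightarrow> 'a ^ 'k \<Rightarrow> bool" where
  "rectangle i j a b c d \<longleftrightarrow> i \<noteq> j \<and>
     a $ i = b $ i \<and> c $ i = d $ i \<and> b $ j = c $ j \<and> d $ j = a $ j \<and>
     (\<forall>l. l \<noteq> i \<and> l \<noteq> j \<longrightarrow> a $ l = b $ l \<and> b $ l = c $ l \<and> c $ l = d $ l)"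

end

theory Submission
  imports Defs
begin

lemma sum_two:
  fixes g :: "'k::finite \<Rightarrow> 'a::comm_monoid_add"
  assumes "i \<noteq> j"
  shows "(\<Sum>l\<in>UNIV. g l) = g i + g j + (\<Sum>l\<in>UNIV-{i,j}. g l)"
proof -
  have "(\<Sum>l\<in>UNIV. g l) = g i + (\<Sum>l\<in>UNIV-{i}. g l)"
    by (simp add: sum.remove)
  also have "(\<Sum>l\<in>UNIV-{i}. g l) = g j + (\<Sum>l\<in>UNIV-{i}-{j}. g l)"
    using assms by (subst sum.remove[of _ j]) auto
  also have "UNIV-{i}-{j} = UNIV-{i,j}" by auto
  finally show ?thesis by (simp add: add.assoc)
qed

theorem lemma1:
  fixes f :: "'a::{field,finite} ^ 'k::finite \<Rightarrow> 'a"
  assumes "prime CARD('a)"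
    and "CARD('k) \<ge> 2"
    and "linear_latin_hypercube f"
  shows "\<exists>!R :: 'a \<Rightarrow> 'a \<Rightarrow> 'a \<Rightarrow> 'a.
           \<forall>i j a b c d. rectangle i j a b c d \<longrightarrow> f a = R (f b) (f c) (f d)"
proof -
  obtain \<alpha>0 and \<alpha> :: "'k \<Rightarrow> 'a \<Rightarrow> 'a" where b0: "bij \<alpha>0" and bi: "\<And>i. bij (\<alpha> i)"
    and eq: "\<And>x. \<alpha>0 (f x) = (\<Sum>i\<in>UNIV. \<alpha> i (x $ i))"
    using assms(3) unfolding linear_latin_hypercube_def by blast
  have inj0: "\<alpha>0 p = \<alpha>0 q \<Longrightarrow> p = q" for p q using b0 by (meson bij_def injD)
  have surji: "\<exists>u. \<alpha> i u = t" for i t using bi[of i] by (metis bij_def surjD)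
  define R where "R = (\<lambda>x y z. inv \<alpha>0 (\<alpha>0 x - \<alpha>0 y + \<alpha>0 z))"
  have key: "\<alpha>0 (f a) = \<alpha>0 (f b) - \<alpha>0 (f c) + \<alpha>0 (f d)" if r: "rectangle i j a b c d" for i j :: 'k and a b c d :: "'a ^ 'k"
  proof -
    from r have ij: "i \<noteq> j" and h: "a $ i = b $ i" "c $ i = d $ i" "b $ j = c $ j" "d $ j = a $ j"
      and o: "\<And>l. l \<noteq> i \<and> l \<noteq> j \<Longrightarrow> a $ l = b $ l \<and> b $ l = c $ l \<and> c $ l = d $ l"
      unfolding rectangle_def by blast+
    define S where "S = (\<Sum>l\<in>UNIV-{i,j}. \<alpha> l (a $ l))"
    have Sb: "(\<Sum>l\<in>UNIV-{i,j}. \<alpha> l (b $ l)) = S" unfolding S_def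
      by (rule sum.cong) (use o in auto)
    have Sc: "(\<Sum>l\<in>UNIV-{i,j}. \<alpha> l (c $ l)) = S" unfolding S_def
      by (rule sum.cong) (use o in auto)
    have Sd: "(\<Sum>l\<in>UNIV-{i,j}. \<alpha> l (d $ l)) = S" unfolding S_def
      by (rule sum.cong) (use o in auto)
    show ?thesis unfolding eq sum_two[OF ij] Sb Sc Sd S_def[symmetric] using h
      by (simp add: algebra_simps)
  qed
  show ?thesis
  proof (rule ex1I[of _ R], intro allI impI)
    fix i j :: 'k and a b c d :: "'a ^ 'k" assume "rectangle i j a b c d"
    then show "f a = R (f b) (f c) (f d)" unfolding R_def
      by (subst bij_inv_eq_iff[OF b0]) (rule key)
  next
    fix R' :: "'a \<Rightarrow> 'a \<Rightarrow> 'a \<Rightarrow> 'a"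
    assume R': "\<forall>i j a b c d. rectangle i j a b c d \<longrightarrow> f a = R' (f b) (f c) (f d)"
    obtain i j :: 'k where ij: "i \<noteq> j"
    proof -
      have "\<exists>i j::'k. i \<noteq> j"
      proof (rule ccontr)
        assume "\<not> ?thesis"
        then have "UNIV \<subseteq> {undefined::'k}" by auto
        then have "CARD('k) \<le> card {undefined::'k}" by (intro card_mono) auto
        then have "CARD('k) \<le> 1" by simp
        with assms(2) show False by simp
      qed
      then show ?thesis using that by blast
    qed
    show "R' = R"
    proof (intro ext)
      fix x y z
      define S where "S = (\<Sum>l\<in>UNIV-{i,j}. \<alpha> l (0::'a))"
      obtain u' where u': "\<alpha> i u' = \<alpha>0 y - S - \<alpha> j 0" using surji by blast
      obtain u where u: "\<alpha> i u = \<alpha>0 x - S - \<alpha> j 0" using surji by blast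
      obtain v where v: "\<alpha> j v = \<alpha>0 z - S - \<alpha> i u'" using surji by blast
      define mk where "mk = (\<lambda>p q. (\<chi> l. if l = i then p else if l = j then q else (0::'a)) :: 'a ^ 'k)"
      have fmk: "\<alpha>0 (f (mk p q)) = \<alpha> i p + \<alpha> j q + S" for p q
      proof -
        have "(\<Sum>l\<in>UNIV-{i,j}. \<alpha> l (mk p q $ l)) = S" unfolding S_def mk_def
          by (rule sum.cong) auto
        then show ?thesis unfolding eq sum_two[OF ij] using ij by (simp add: mk_def)
      qed
      have r: "rectangle i j (mk u v) (mk u 0) (mk u' 0) (mk u' v)"
        unfolding rectangle_def mk_def using ij by auto
      have fb: "f (mk u 0) = x" by (rule inj0) (simp add: fmk u)
      have fc: "f (mk u' 0) = y" by (rule inj0) (simp add: fmk u')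
      have fd: "f (mk u' v) = z" by (rule inj0) (simp add: fmk v u')
      have "f (mk u v) = R' x y z" using R' r fb fc fd by metis
      moreover have "f (mk u v) = R x y z" unfolding R_def
        by (subst bij_inv_eq_iff[OF b0]) (use key[OF r] fb fc fd in simp)
      ultimately show "R' x y z = R x y z" by simp
    qed
  qed
qed

end
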